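(* Let $p$ be an odd prime and for $n\geq 0$ let $b_n=(p^n-1)/(p-1)$. Then for every integer $j\geq 0$ and every $\tau\in\mathbb{H}$, $$\prod_{k=0}^{p^j-1}\theta_3\Big(\tau+\frac{2k}{p^j}\Big)=\frac{\theta_3^{b_{j+1}}(p^j\tau)}{\theta_3^{b_j}(p^{j+1}\tau)}.$$
   Context: $\mathbb{H}=\{\tau\in\mathbb{C}:\Im(\tau)>0\}$. For $\tau\in\mathbb{H}$, $\theta_3(\tau)=1+2\sum_{\nu=1}^{\infty}e^{\pi i\nu^2\tau}$. *)

theory Defs
  imports "HOL-Analysis.Analysis" "HOL-Computational_Algebra.Primes"
begin

definition upper_half_plane :: "complex set" where
  "upper_half_plane = {\<tau>. Im \<tau> > 0}"

definition theta3 :: "complex \<Rightarrow> complex" where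
  "theta3 \<tau> = 1 + 2 * (\<Sum>\<nu>. exp (pi * \<i> * of_nat ((Suc \<nu>)^2) * \<tau>))"

definition b_seq :: "nat \<Rightarrow> nat \<Rightarrow> nat" where
  "b_seq p n = (p ^ n - 1) div (p - 1)"

end

theory Submission
  imports Defs "HOL-Computational_Algebra.Fundamental_Theorem_Algebra"
begin

lemma prod_lim_gen:
  fixes z c :: complex and a :: "nat \<Rightarrow> nat"
  assumes z: "norm z < 1" and c: "norm c = 1" and a: "\<And>i. a i \<ge> Suc i"
  shows "(\<lambda>n. \<Prod>i<n. 1 + c * z ^ a i) \<longlonglongrightarrow> (\<Prod>i. 1 + c * z ^ a i)"
    and "(\<Prod>i. 1 + c * z ^ a i) \<noteq> 0"
proof -
  have bnd: "norm (c * z ^ a i) \<le> norm z ^ Suc i" for i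
  proof -
    have "norm (c * z ^ a i) = norm z ^ a i" by (simp add: norm_mult norm_power c)
    also have "\<dots> \<le> norm z ^ Suc i" using a[of i] z by (intro power_decreasing) auto
    finally show ?thesis .
  qed
  have "summable (\<lambda>i. norm z ^ Suc i)" using z by (simp add: summable_geometric)
  hence "summable (\<lambda>i. norm ((1 + c * z ^ a i) - 1))"
    by (rule summable_comparison_test') (use bnd in auto)
  hence cp: "convergent_prod (\<lambda>i. 1 + c * z ^ a i)"
    by (intro abs_convergent_prod_imp_convergent_prod summable_imp_abs_convergent_prod)
  have nz: "1 + c * z ^ a i \<noteq> 0" for i
  proof
    assume "1 + c * z ^ a i = 0"
    hence "c * z ^ a i = -1" by (simp add: add_eq_0_iff)
    hence "norm (c * z ^ a i) = 1" by simp
    moreover have "norm z ^ Suc i \<le> norm z ^ 1" using z by (intro power_decreasing) auto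
    hence "norm z ^ Suc i < 1" using z by simp
    ultimately show False using bnd[of i] by simp
  qed
  show "(\<Prod>i. 1 + c * z ^ a i) \<noteq> 0" using cp nz by (rule prodinf_nonzero)
  have "(\<lambda>n. \<Prod>i\<le>n. 1 + c * z ^ a i) \<longlonglongrightarrow> (\<Prod>i. 1 + c * z ^ a i)"
    using cp by (rule convergent_prod_LIMSEQ)
  hence "(\<lambda>n. \<Prod>i<Suc n. 1 + c * z ^ a i) \<longlonglongrightarrow> (\<Prod>i. 1 + c * z ^ a i)"
    by (simp add: lessThan_Suc_atMost)
  thus "(\<lambda>n. \<Prod>i<n. 1 + c * z ^ a i) \<longlonglongrightarrow> (\<Prod>i. 1 + c * z ^ a i)"
    by (rule LIMSEQ_imp_Suc)
qed

definition ep :: "complex \<Rightarrow> nat \<Rightarrow> complex" where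
  "ep q n = (\<Prod>i<n. 1 - q ^ (2 * Suc i))"
definition op :: "complex \<Rightarrow> nat \<Rightarrow> complex" where
  "op q n = (\<Prod>i<n. 1 + q ^ (2 * i + 1))"
definition EP :: "complex \<Rightarrow> complex" where
  "EP q = (\<Prod>i. 1 - q ^ (2 * Suc i))"
definition OP :: "complex \<Rightarrow> complex" where
  "OP q = (\<Prod>i. 1 + q ^ (2 * i + 1))"

lemma ep_lim: assumes "norm q < 1" shows "ep q \<longlonglongrightarrow> EP q" "EP q \<noteq> 0"
proof -
  have e: "1 - q ^ (2 * Suc i) = 1 + (-1) * q ^ (2 * Suc i)" for i by simp
  show "ep q \<longlonglongrightarrow> EP q" "EP q \<noteq> 0"
    using prod_lim_gen[OF assms, of "-1" "\<lambda>i. 2 * Suc i"]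
    unfolding ep_def[abs_def] EP_def e by auto
qed

lemma op_lim: assumes "norm q < 1" shows "op q \<longlonglongrightarrow> OP q" "OP q \<noteq> 0"
  using prod_lim_gen[OF assms, of "1" "\<lambda>i. 2 * i + 1"]
  unfolding op_def[abs_def] OP_def by auto

lemma ep_nz: assumes "norm q < 1" shows "ep q n \<noteq> 0"
proof -
  have "1 - q ^ (2 * Suc i) \<noteq> 0" for i
  proof
    assume "1 - q ^ (2 * Suc i) = 0"
    hence "norm (q ^ (2 * Suc i)) = 1" by (metis eq_iff_diff_eq_0 norm_one)
    moreover have "norm q ^ (2 * Suc i) \<le> norm q ^ 1" using assms by (intro power_decreasing) auto
    hence "norm (q ^ (2 * Suc i)) < 1" using assms unfolding norm_power power_one_right by linarith
    ultimately show False by simp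
  qed
  thus ?thesis unfolding ep_def by (simp add: prod_zero_iff)
qed

definition qb :: "complex \<Rightarrow> nat \<Rightarrow> nat \<Rightarrow> complex" where
  "qb q N k = (if k \<le> N then ep q N / (ep q k * ep q (N - k)) else 0)"

lemma ep_Suc: "ep q (Suc n) = ep q n * (1 - q ^ (2 * Suc n))"
  by (simp add: ep_def)

lemma ep_0 [simp]: "ep q 0 = 1" by (simp add: ep_def)

lemma qb0 [simp]: "norm q < 1 \<Longrightarrow> qb q N 0 = 1"
  using ep_nz[of q N] by (simp add: qb_def)

lemma qb_big [simp]: "N < k \<Longrightarrow> qb q N k = 0"
  by (simp add: qb_def)

lemma qb_diag [simp]: "norm q < 1 \<Longrightarrow> qb q N N = 1"
  using ep_nz[of q N] by (simp add: qb_def)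

lemma qb_sym: "k \<le> N \<Longrightarrow> qb q N (N - k) = qb q N k"
  by (simp add: qb_def mult.commute)

lemma pasc_alg:
  fixes E ek em a b :: complex
  assumes "ek \<noteq> 0" "em \<noteq> 0" "1 - a \<noteq> 0" "1 - b \<noteq> 0"
  shows "E * (1 - a * b) / (ek * (1 - a) * (em * (1 - b))) = E / (ek * (1 - a) * em) + b * (E / (ek * (em * (1 - b))))"
proof -
  have "E * (1 - a * b) = E * (1 - b) + b * (E * (1 - a))" by (simp add: algebra_simps)
  hence "E * (1 - a * b) / (ek * (1 - a) * (em * (1 - b))) = (E * (1 - b) + b * (E * (1 - a))) / (ek * (1 - a) * (em * (1 - b)))" by simp
  also have "\<dots> = E * (1 - b) / (ek * (1 - a) * (em * (1 - b))) + b * (E * (1 - a)) / (ek * (1 - a) * (em * (1 - b)))"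
    by (rule add_divide_distrib)
  also have "E * (1 - b) / (ek * (1 - a) * (em * (1 - b))) = E / (ek * (1 - a) * em)"
    using assms by simp
  also have "b * (E * (1 - a)) / (ek * (1 - a) * (em * (1 - b))) = b * (E / (ek * (em * (1 - b))))"
    using assms by simp
  finally show ?thesis .
qed

lemma qb_pascal:
  assumes q: "norm q < 1" and k: "k \<le> N"
  shows "qb q (Suc N) (Suc k) = qb q N (Suc k) + q ^ (2 * (N - k)) * qb q N k"
proof (cases "k = N")
  case True thus ?thesis using q by simp
next
  case False
  define m where "m = N - k - 1"
  have N: "N = k + Suc m" using k False unfolding m_def by simp
  define a where "a = q ^ (2 * Suc k)"
  define b where "b = q ^ (2 * Suc m)"
  have ee: "2 * Suc (Suc (k + m)) = 2 * Suc k + 2 * Suc m" by simp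
  have ab: "q ^ (2 * Suc (Suc (k + m))) = a * b" unfolding a_def b_def ee power_add ..
  have nz: "ep q n \<noteq> 0" for n using ep_nz[OF q] .
  have na: "1 - a \<noteq> 0" using nz[of "Suc k"] by (simp add: ep_Suc a_def)
  have nb: "1 - b \<noteq> 0" using nz[of "Suc m"] by (simp add: ep_Suc b_def)
  have e1: "Suc N - Suc k = Suc m" "N - Suc k = m" "N - k = Suc m" using N by auto
  have e3: "Suc (Suc (k + m)) - Suc k = Suc m" "Suc (k + m) - k = Suc m" by simp_all
  have e2: "Suc N = Suc (Suc (k + m))" "N = Suc (k + m)" using N by auto
  have L: "qb q (Suc N) (Suc k) = ep q (Suc (k+m)) * (1 - a*b) / (ep q k * (1-a) * (ep q m * (1-b)))"
    unfolding qb_def using k by (simp only: e1 e2 e3 if_True Suc_le_mono ep_Suc[of q "Suc (k+m)"] ep_Suc[of q k] ep_Suc[of q m] ab flip: a_def b_def)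
  have R1: "qb q N (Suc k) = ep q (Suc (k+m)) / (ep q k * (1-a) * ep q m)"
    unfolding qb_def using k False by (simp only: e1 e2 ep_Suc[of q k] flip: a_def) simp
  have R2: "q ^ (2 * (N - k)) * qb q N k = b * (ep q (Suc (k+m)) / (ep q k * (ep q m * (1-b))))"
    unfolding qb_def using k by (simp only: e1 e2 e3 if_True ep_Suc[of q m] flip: b_def)
  show ?thesis unfolding L R1 R2 using nz[of k] nz[of m] na nb by (rule pasc_alg)
qed
definition qS :: "complex \<Rightarrow> nat \<Rightarrow> complex \<Rightarrow> complex" where
  "qS q N x = (\<Sum>k\<le>N. qb q N k * q ^ (k * (k - 1)) * x ^ k)"

lemma exp_aux: "k \<le> N \<Longrightarrow> 2 * (N - k) + Suc k * k = k * (k - 1) + 2 * N"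
proof -
  assume "k \<le> N"
  then obtain d where "N = k + d" by (metis le_iff_add)
  thus ?thesis by (cases k) (auto simp: algebra_simps)
qed


lemma qbinom:
  assumes q: "norm q < 1"
  shows "(\<Prod>i<N. 1 + x * q ^ (2 * i)) = qS q N x"
proof (induction N)
  case 0 thus ?case using q by (simp add: qS_def)
next
  case (Suc N)
  have A: "qS q N x = 1 + (\<Sum>k\<le>N. qb q N (Suc k) * q ^ (Suc k * k) * x ^ Suc k)"
  proof -
    have "qS q N x = (\<Sum>k\<le>Suc N. qb q N k * q ^ (k * (k - 1)) * x ^ k)"
      by (simp add: qS_def)
    also have "\<dots> = 1 + (\<Sum>k\<le>N. qb q N (Suc k) * q ^ (Suc k * k) * x ^ Suc k)"
      by (subst sum.atMost_Suc_shift) (simp add: q)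
    finally show ?thesis .
  qed
  have B: "(\<Sum>k\<le>N. q ^ (2 * (N - k)) * qb q N k * q ^ (Suc k * k) * x ^ Suc k)
         = x * q ^ (2 * N) * qS q N x"
    unfolding qS_def sum_distrib_left
  proof (rule sum.cong)
    fix k assume "k \<in> {..N}"
    hence ex: "2 * (N - k) + Suc k * k = k * (k - 1) + 2 * N" by (intro exp_aux) simp
    hence "q ^ (2 * (N - k)) * q ^ (Suc k * k) = q ^ (k * (k - 1)) * q ^ (2 * N)"
      by (simp only: power_add[symmetric] ex)
    thus "q ^ (2 * (N - k)) * qb q N k * q ^ (Suc k * k) * x ^ Suc k =
          x * q ^ (2 * N) * (qb q N k * q ^ (k * (k - 1)) * x ^ k)"
      by (simp add: algebra_simps)
  qed simp
  have "qS q (Suc N) x = 1 + (\<Sum>k\<le>N. qb q (Suc N) (Suc k) * q ^ (Suc k * k) * x ^ Suc k)"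
    unfolding qS_def by (subst sum.atMost_Suc_shift) (simp add: q)
  also have "\<dots> = 1 + (\<Sum>k\<le>N. qb q N (Suc k) * q ^ (Suc k * k) * x ^ Suc k)
      + (\<Sum>k\<le>N. q ^ (2 * (N - k)) * qb q N k * q ^ (Suc k * k) * x ^ Suc k)"
    by (simp only: add.assoc sum.distrib[symmetric], rule arg_cong[where f="\<lambda>t. 1 + t"],
        rule sum.cong, simp, simp add: qb_pascal[OF q] distrib_right)
  also have "\<dots> = qS q N x * (1 + x * q ^ (2 * N))"
    unfolding B A[symmetric] by (simp add: algebra_simps)
  finally show ?case using Suc by simp
qed

lemma prod_split_add: "(\<Prod>i<m+n. g i) = (\<Prod>i<m. g i) * (\<Prod>i<n. g (m + i))"
  for g :: "nat \<Rightarrow> 'a::comm_monoid_mult"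
  by (induction n) (simp_all add: ac_simps)

lemma sum_split_add: "(\<Sum>i<m+n. g i) = (\<Sum>i<m. g i) + (\<Sum>i<n. g (m + i))"
  for g :: "nat \<Rightarrow> 'a::comm_monoid_add"
  by (induction n) (simp_all add: ac_simps)

lemma sq_exp: "(Suc m)^2 = (\<Sum>i<Suc m. 2 * i + 1)"
  by (induction m) (simp_all add: power2_eq_square)

lemma div_aux: "a \<noteq> 0 \<Longrightarrow> (1 + a) / a = 1 + 1 / (a::complex)"
  by (simp add: field_simps)

lemma finite_jtp0:
  assumes q: "norm q < 1" "q \<noteq> 0"
  shows "op q n ^ 2 = (\<Sum>k\<le>2*n. qb q (2*n) k * q ^ (k^2) * q ^ (n^2) / q ^ (2*n*k))"
proof -
  define x where "x = q / q ^ (2*n)"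
  have qn: "q ^ j \<noteq> 0" for j using q by simp
  have "(\<Prod>i<2*n. 1 + x * q ^ (2 * i)) = (\<Prod>i<n. 1 + x * q ^ (2 * i)) * (\<Prod>m<n. 1 + x * q ^ (2 * (n + m)))"
    using prod_split_add[of "\<lambda>i. 1 + x * q ^ (2 * i)" n n] by (simp only: mult_2[of n])
  also have "(\<Prod>m<n. 1 + x * q ^ (2 * (n + m))) = op q n"
    unfolding op_def
  proof (rule prod.cong)
    fix m
    have "x * q ^ (2 * (n + m)) = q * q ^ (2*m) * q ^ (2*n) / q ^ (2*n)"
      unfolding x_def by (simp add: power_add algebra_simps)
    also have "\<dots> = q ^ (2 * m + 1)" using qn by simp
    finally show "1 + x * q ^ (2 * (n + m)) = 1 + q ^ (2 * m + 1)" by simp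
  qed simp
  also have "(\<Prod>i<n. 1 + x * q ^ (2 * i)) = (\<Prod>m<n. 1 + x * q ^ (2 * (n - Suc m)))"
    by (rule prod.nat_diff_reindex[symmetric])
  also have "\<dots> = (\<Prod>m<n. (1 + q ^ (2 * m + 1)) / q ^ (2 * m + 1))"
  proof (rule prod.cong)
    fix m assume "m \<in> {..<n}"
    hence e: "2 * n = 2 * (n - Suc m) + (2 * m + 1) + 1" by simp
    have "x * q ^ (2 * (n - Suc m)) = 1 / q ^ (2 * m + 1)"
      unfolding x_def e using qn by (simp add: power_add field_simps)
    thus "1 + x * q ^ (2 * (n - Suc m)) = (1 + q ^ (2 * m + 1)) / q ^ (2 * m + 1)"
      by (simp only: div_aux[OF qn])
  qed simp
  also have "\<dots> = op q n / q ^ (n^2)"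
  proof -
    have "(\<Prod>m<n. q ^ (2 * m + 1)) = q ^ (n^2)"
    proof (cases n)
      case 0 thus ?thesis by simp
    next
      case (Suc n') thus ?thesis by (simp only: sq_exp power_sum)
    qed
    thus ?thesis unfolding op_def prod_dividef by simp
  qed
  finally have L: "(\<Prod>i<2*n. 1 + x * q ^ (2 * i)) = op q n ^ 2 / q ^ (n^2)"
    by (simp add: power2_eq_square)
  have R: "qS q (2*n) x = (\<Sum>k\<le>2*n. qb q (2*n) k * q ^ (k^2) / q ^ (2*n*k))"
    unfolding qS_def
  proof (rule sum.cong)
    fix k
    have "q ^ (k * (k - 1)) * x ^ k = q ^ (k * (k - 1)) * q ^ k / q ^ (2*n*k)"
      unfolding x_def by (simp add: power_divide power_mult[symmetric] mult.commute)
    also have "q ^ (k * (k - 1)) * q ^ k = q ^ (k^2)"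
      by (cases k) (simp_all add: power_add[symmetric] power2_eq_square algebra_simps)
    finally show "qb q (2 * n) k * q ^ (k * (k - 1)) * x ^ k = qb q (2 * n) k * q ^ (k^2) / q ^ (2*n*k)"
      by (simp add: mult.assoc)
  qed simp
  have "op q n ^ 2 = q ^ (n^2) * (\<Prod>i<2*n. 1 + x * q ^ (2 * i))"
    unfolding L using qn by simp
  also have "\<dots> = q ^ (n^2) * (\<Sum>k\<le>2*n. qb q (2*n) k * q ^ (k^2) / q ^ (2*n*k))"
    unfolding qbinom[OF q(1)] R ..
  also have "\<dots> = (\<Sum>k\<le>2*n. qb q (2*n) k * q ^ (k^2) * q ^ (n^2) / q ^ (2*n*k))"
    by (simp add: sum_distrib_left algebra_simps)
  finally show ?thesis .
qed

lemma pow_aux: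
  fixes q :: complex
  assumes "q \<noteq> 0" "k^2 + n^2 = d^2 + 2*n*k"
  shows "q ^ (k^2) * q ^ (n^2) / q ^ (2*n*k) = q ^ (d^2)"
proof -
  have "q ^ (k^2) * q ^ (n^2) = q ^ (d^2) * q ^ (2*n*k)"
    by (simp only: power_add[symmetric] assms(2))
  thus ?thesis using assms(1) by simp
qed

lemma finite_jtp:
  assumes q: "norm q < 1" "q \<noteq> 0"
  shows "op q n ^ 2 = qb q (2*n) n + 2 * (\<Sum>m<n. qb q (2*n) (n+1+m) * q ^ ((m+1)^2))"
proof -
  define f where "f k = qb q (2*n) k * q ^ (k^2) * q ^ (n^2) / q ^ (2*n*k)" for k
  have "op q n ^ 2 = (\<Sum>k<n + (1 + n). f k)"
    unfolding finite_jtp0[OF q] f_def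
    by (rule sum.cong) auto
  also have "\<dots> = (\<Sum>k<n. f k) + f n + (\<Sum>m<n. f (n + 1 + m))"
    unfolding sum_split_add[of _ n "1 + n"] sum_split_add[of _ 1 n] by (simp add: add.assoc)
  also have "(\<Sum>k<n. f k) = (\<Sum>m<n. f (n - Suc m))"
    by (rule sum.nat_diff_reindex[symmetric])
  also have "\<dots> = (\<Sum>m<n. qb q (2*n) (n+1+m) * q ^ ((m+1)^2))"
  proof (rule sum.cong)
    fix m assume m: "m \<in> {..<n}"
    have e: "(n - Suc m)^2 + n^2 = (m+1)^2 + 2*n*(n - Suc m)"
    proof -
      obtain d where "n = Suc m + d" using m by (metis le_iff_add lessThan_iff Suc_leI)
      thus ?thesis by (simp add: power2_eq_square algebra_simps)
    qed
    have s: "qb q (2*n) (n - Suc m) = qb q (2*n) (n+1+m)"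
      using qb_sym[of "n+1+m" "2*n" q] m by (simp add: numeral_2_eq_2)
    show "f (n - Suc m) = qb q (2*n) (n+1+m) * q ^ ((m+1)^2)"
      unfolding f_def s using pow_aux[OF q(2) e] by (metis times_divide_eq_right mult.assoc)
  qed simp
  also have "f n = qb q (2*n) n"
    unfolding f_def using pow_aux[OF q(2), of n n 0] by (simp add: mult.assoc power2_eq_square)
  also have "(\<Sum>m<n. f (n + 1 + m)) = (\<Sum>m<n. qb q (2*n) (n+1+m) * q ^ ((m+1)^2))"
  proof (rule sum.cong)
    fix m
    have e: "(n+1+m)^2 + n^2 = (m+1)^2 + 2*n*(n+1+m)"
      by (simp add: power2_eq_square algebra_simps)
    show "f (n + 1 + m) = qb q (2*n) (n+1+m) * q ^ ((m+1)^2)"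
      unfolding f_def using pow_aux[OF q(2) e] by (metis times_divide_eq_right mult.assoc)
  qed simp
  finally show ?thesis by (simp add: algebra_simps)
qed

lemma one_minus_exp_bound:
  fixes w :: real assumes "0 \<le> w" "w < 1"
  shows "exp (- (w / (1 - w))) \<le> 1 - w"
proof -
  have "1 + w / (1 - w) \<le> exp (w / (1 - w))" by (rule exp_ge_add_one_self)
  moreover have "1 + w / (1 - w) = 1 / (1 - w)" using assms by (simp add: field_simps)
  ultimately have "1 / (1 - w) \<le> exp (w / (1 - w))" by simp
  hence "1 / exp (w / (1 - w)) \<le> 1 - w" using assms
    by (simp add: field_simps)
  thus ?thesis by (simp add: exp_minus field_simps)
qed

lemma ep_bounds_aux:
  assumes q: "norm q < 1"
  shows "norm (ep q n) \<le> exp (\<Sum>i<n. norm q ^ Suc i)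
       \<and> exp (- (\<Sum>i<n. norm q ^ Suc i) / (1 - norm q)) \<le> norm (ep q n)"
proof (induction n)
  case 0 thus ?case by simp
next
  case (Suc n)
  define r where "r = norm q"
  define w where "w = norm (q ^ (2 * Suc n))"
  have r: "0 \<le> r" "r < 1" using q by (auto simp: r_def)
  have w0: "0 \<le> w" unfolding w_def by simp
  have wr: "w \<le> r ^ Suc n" unfolding w_def r_def norm_power using r
    by (intro power_decreasing) (auto simp: r_def)
  have rr: "r ^ Suc n \<le> r" using r by (intro power_decreasing[of 1, simplified]) auto
  have w1: "w < 1" using wr rr r by linarith
  have up: "norm (1 - q ^ (2 * Suc n)) \<le> exp (r ^ Suc n)"
  proof -
    have "norm (1 - q ^ (2 * Suc n)) \<le> 1 + w" unfolding w_def
      by (metis norm_one norm_triangle_ineq4)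
    also have "\<dots> \<le> exp w" by simp
    also have "\<dots> \<le> exp (r ^ Suc n)" using wr by simp
    finally show ?thesis .
  qed
  have lo: "exp (- (r ^ Suc n / (1 - r))) \<le> norm (1 - q ^ (2 * Suc n))"
  proof -
    have "w / (1 - w) \<le> r ^ Suc n / (1 - r)"
      using wr w0 w1 r rr by (intro frac_le) auto
    hence "exp (- (r ^ Suc n / (1 - r))) \<le> exp (- (w / (1 - w)))" by simp
    also have "\<dots> \<le> 1 - w" by (rule one_minus_exp_bound[OF w0 w1])
    also have "\<dots> \<le> norm (1 - q ^ (2 * Suc n))" unfolding w_def
      by (metis norm_one norm_triangle_ineq2)
    finally show ?thesis .
  qed
  have IH1: "norm (ep q n) \<le> exp (\<Sum>i<n. r ^ Suc i)"
   and IH2: "exp (- (\<Sum>i<n. r ^ Suc i) / (1 - r)) \<le> norm (ep q n)"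
    using Suc.IH by (auto simp: r_def)
  have "norm (ep q (Suc n)) = norm (ep q n) * norm (1 - q ^ (2 * Suc n))"
    by (simp add: ep_Suc norm_mult)
  also have "\<dots> \<le> exp (\<Sum>i<n. r ^ Suc i) * exp (r ^ Suc n)"
    by (intro mult_mono IH1 up) auto
  also have "\<dots> = exp (\<Sum>i<Suc n. r ^ Suc i)" by (simp add: exp_add)
  finally have A: "norm (ep q (Suc n)) \<le> exp (\<Sum>i<Suc n. r ^ Suc i)" .
  have "exp (- (\<Sum>i<Suc n. r ^ Suc i) / (1 - r)) =
        exp (- (\<Sum>i<n. r ^ Suc i) / (1 - r)) * exp (- (r ^ Suc n / (1 - r)))"
    by (simp add: exp_add[symmetric] diff_divide_distrib add_divide_distrib)
  also have "\<dots> \<le> norm (ep q n) * norm (1 - q ^ (2 * Suc n))"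
    by (intro mult_mono IH2 lo) auto
  also have "\<dots> = norm (ep q (Suc n))" by (simp add: ep_Suc norm_mult)
  finally show ?case using A by (simp add: r_def)
qed

lemma geom_partial_bound:
  fixes r :: real assumes "0 \<le> r" "r < 1"
  shows "(\<Sum>i<n. r ^ Suc i) \<le> 1 / (1 - r)"
proof -
  have "(\<Sum>i<n. r ^ Suc i) \<le> (\<Sum>i<n. r ^ i)"
    using assms by (intro sum_mono power_decreasing) auto
  also have "\<dots> = (1 - r ^ n) / (1 - r)" using assms by (simp add: sum_gp_strict)
  also have "\<dots> \<le> 1 / (1 - r)" using assms by (intro divide_right_mono) auto
  finally show ?thesis .
qed

lemma ep_bounds:
  assumes q: "norm q < 1"
  shows "norm (ep q n) \<le> exp (1 / (1 - norm q))"
    and "exp (- (1 / (1 - norm q)) / (1 - norm q)) \<le> norm (ep q n)"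
proof -
  have g: "(\<Sum>i<n. norm q ^ Suc i) \<le> 1 / (1 - norm q)"
    using q by (intro geom_partial_bound) auto
  show "norm (ep q n) \<le> exp (1 / (1 - norm q))"
    using ep_bounds_aux[OF q, of n] g by (meson exp_le_cancel_iff order_trans)
  have "- (1 / (1 - norm q)) / (1 - norm q) \<le> - (\<Sum>i<n. norm q ^ Suc i) / (1 - norm q)"
    using g q by (intro divide_right_mono) auto
  thus "exp (- (1 / (1 - norm q)) / (1 - norm q)) \<le> norm (ep q n)"
    using ep_bounds_aux[OF q, of n] by (meson exp_le_cancel_iff order_trans)
qed

lemma qb_bound:
  assumes q: "norm q < 1"
  shows "norm (qb q N k) \<le> exp (1 / (1 - norm q)) / exp (- (1 / (1 - norm q)) / (1 - norm q)) ^ 2"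
proof (cases "k \<le> N")
  case True
  define U where "U = exp (1 / (1 - norm q))"
  define L where "L = exp (- (1 / (1 - norm q)) / (1 - norm q))"
  have L0: "0 < L" unfolding L_def by simp
  have "norm (qb q N k) = norm (ep q N) / (norm (ep q k) * norm (ep q (N - k)))"
    using True by (simp add: qb_def norm_mult norm_divide)
  also have "\<dots> \<le> U / (L * L)"
    using ep_bounds[OF q, of N] ep_bounds[OF q, of k] ep_bounds[OF q, of "N-k"] L0
    unfolding U_def[symmetric] L_def[symmetric]
    by (intro frac_le mult_mono) auto
  finally show ?thesis by (simp add: U_def L_def power2_eq_square)
next
  case False thus ?thesis by (simp add: qb_def)
qed

definition Th :: "complex \<Rightarrow> complex" where
  "Th q = 1 + 2 * (\<Sum>n. q ^ ((Suc n)^2))"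

lemma ep_lim_2: "norm q < 1 \<Longrightarrow> (\<lambda>n. ep q (2*n)) \<longlonglongrightarrow> EP q"
proof -
  assume q: "norm q < 1"
  have "strict_mono (\<lambda>n::nat. 2*n)" by (auto simp: strict_mono_def)
  from LIMSEQ_subseq_LIMSEQ[OF ep_lim(1)[OF q] this] show ?thesis by (simp add: o_def)
qed

lemma ep_lim_minus: "norm q < 1 \<Longrightarrow> (\<lambda>n. ep q (n - c)) \<longlonglongrightarrow> EP q"
  using filterlim_compose[OF ep_lim(1) filterlim_minus_const_nat_at_top] by blast

lemma ep_lim_plus: "norm q < 1 \<Longrightarrow> (\<lambda>n. ep q (n + c)) \<longlonglongrightarrow> EP q"
  using LIMSEQ_ignore_initial_segment[OF ep_lim(1)] by blast

lemma summable_theta: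
  fixes q :: complex
  assumes "norm q < 1" shows "summable (\<lambda>m. q ^ ((Suc m)^2))"
proof -
  have s: "summable (\<lambda>m. norm q ^ m)" using assms by (simp add: summable_geometric)
  have b: "norm (q ^ ((Suc m)^2)) \<le> norm q ^ m" for m
  proof -
    have "m \<le> (Suc m)^2" by (simp add: power2_eq_square)
    thus "norm (q ^ ((Suc m)^2)) \<le> norm q ^ m" unfolding norm_power using assms
      by (intro power_decreasing) auto
  qed
  show ?thesis by (rule summable_comparison_test'[OF s]) (use b in auto)
qed

theorem jtp:
  assumes q: "norm q < 1" "q \<noteq> 0"
  shows "Th q = EP q * OP q ^ 2"
proof -
  define B where "B = exp (1 / (1 - norm q)) / exp (- (1 / (1 - norm q)) / (1 - norm q)) ^ 2"
  define a where "a m n = (if m < n then qb q (2*n) (n+1+m) else 0) * q ^ ((m+1)^2)" for m n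
  have EP0: "EP q \<noteq> 0" using ep_lim(2)[OF q(1)] .
  have lim_a: "(\<lambda>n. a m n) \<longlonglongrightarrow> q ^ ((m+1)^2) / EP q" for m
  proof -
    have ev: "eventually (\<lambda>n. ep q (2*n) / (ep q (n + Suc m) * ep q (n - Suc m)) * q ^ ((m+1)^2) = a m n) sequentially"
      using eventually_gt_at_top[of m]
    proof eventually_elim
      case (elim n)
      have "n + 1 + m \<le> 2 * n" "2 * n - (n + 1 + m) = n - Suc m" using elim by auto
      thus ?case unfolding a_def qb_def using elim by simp
    qed
    have "(\<lambda>n. ep q (2*n) / (ep q (n + Suc m) * ep q (n - Suc m)) * q ^ ((m+1)^2))
          \<longlonglongrightarrow> EP q / (EP q * EP q) * q ^ ((m+1)^2)"
      using EP0 by (intro tendsto_intros ep_lim_2 ep_lim_plus ep_lim_minus q) auto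
    also have "EP q / (EP q * EP q) * q ^ ((m+1)^2) = q ^ ((m+1)^2) / EP q"
      using EP0 by (simp add: field_simps)
    finally show ?thesis using tendsto_cong[OF ev] by simp
  qed
  have bnd: "norm (a m n) \<le> B * norm q ^ m" for m n
  proof -
    have "norm (a m n) \<le> B * norm q ^ ((m+1)^2)"
      unfolding a_def B_def norm_mult norm_power
      using qb_bound[OF q(1), of "2*n" "n+1+m"]
      by (intro mult_right_mono) auto
    also have "\<dots> \<le> B * norm q ^ m"
    proof (intro mult_left_mono power_decreasing)
      show "m \<le> (m+1)^2" by (simp add: power2_eq_square)
    qed (use q in \<open>auto simp: B_def\<close>)
    finally show ?thesis .
  qed
  have "summable (\<lambda>m. B * norm q ^ m)" using q by (intro summable_mult summable_geometric) auto
  from tannerys_theorem[of a "\<lambda>m. q ^ ((m+1)^2) / EP q" sequentially "\<lambda>m. B * norm q ^ m", OF lim_a _ this]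
  have T: "(\<lambda>n. \<Sum>m. a m n) \<longlonglongrightarrow> (\<Sum>m. q ^ ((m+1)^2) / EP q)"
    using bnd by (auto intro: always_eventually)
  have fin: "(\<Sum>m. a m n) = (\<Sum>m<n. qb q (2*n) (n+1+m) * q ^ ((m+1)^2))" for n
    by (subst suminf_finite[of "{..<n}"]) (auto simp: a_def)
  have lim_mid: "(\<lambda>n. qb q (2*n) n) \<longlonglongrightarrow> EP q / (EP q * EP q)"
  proof -
    have e: "qb q (2*n) n = ep q (2*n) / (ep q (n + 0) * ep q (n - 0))" for n
      by (simp add: qb_def mult_2)
    show ?thesis unfolding e using EP0
      by (intro tendsto_intros ep_lim_2 ep_lim_plus ep_lim_minus q) auto
  qed
  have L1: "(\<lambda>n. op q n ^ 2) \<longlonglongrightarrow> EP q / (EP q * EP q) + 2 * (\<Sum>m. q ^ ((m+1)^2) / EP q)"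
    unfolding finite_jtp[OF q] by (intro tendsto_intros lim_mid) (use T fin in simp)
  have L2: "(\<lambda>n. op q n ^ 2) \<longlonglongrightarrow> OP q ^ 2"
    by (intro tendsto_intros op_lim(1) q)
  have "OP q ^ 2 = EP q / (EP q * EP q) + 2 * (\<Sum>m. q ^ ((m+1)^2) / EP q)"
    using LIMSEQ_unique[OF L2 L1] .
  also have "(\<Sum>m. q ^ ((m+1)^2) / EP q) = (\<Sum>m. q ^ ((m+1)^2)) / EP q"
    using summable_theta[OF q(1)] by (intro suminf_divide) simp
  also have "EP q / (EP q * EP q) + 2 * ((\<Sum>m. q ^ ((m+1)^2)) / EP q) = Th q / EP q"
    using EP0 by (simp add: Th_def field_simps)
  finally show ?thesis using EP0 by (simp add: field_simps)
qed

definition omega :: "nat \<Rightarrow> complex" where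
  "omega p = exp (2 * of_real pi * \<i> / of_nat p)"

lemma omega_pow: "omega p ^ j = exp (2 * of_real pi * \<i> * of_nat j / of_nat p)"
  unfolding omega_def exp_of_nat_mult[symmetric] by (simp add: algebra_simps)

lemma omega_p: "p > 0 \<Longrightarrow> omega p ^ p = 1"
  unfolding omega_pow by simp

lemma omega_pow_eq_1: "p > 0 \<Longrightarrow> omega p ^ j = 1 \<longleftrightarrow> p dvd j"
  unfolding omega_pow by (rule complex_root_unity_eq_1) simp

lemma omega_norm [simp]: "norm (omega p) = 1"
  unfolding omega_def by (simp add: norm_exp_eq_Re)

lemma roots_prod_poly:
  assumes n: "n > 0"
  shows "(\<Prod>z\<in>{z::complex. z ^ n = 1}. (X - z)) = X ^ n - 1"
proof -
  define P :: "complex poly" where "P = monom 1 n + [:-1:]"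
  have pP: "poly P x = x ^ n - 1" for x by (simp add: P_def poly_monom)
  have dP: "degree P = n" using n unfolding P_def by (subst degree_add_eq_left) (auto simp: degree_monom_eq)
  have "lead_coeff ([:-1:] + monom 1 n) = lead_coeff (monom (1::complex) n)"
    by (rule lead_coeff_add_le) (simp add: degree_monom_eq n)
  hence lP: "lead_coeff P = 1" unfolding P_def by (simp only: add.commute lead_coeff_monom)
  have "rsquarefree P"
    unfolding rsquarefree_roots
  proof (intro allI notI)
    fix a assume "poly P a = 0 \<and> poly (pderiv P) a = 0"
    hence a1: "a ^ n = 1" and a2: "of_nat n * a ^ (n - 1) = 0"
      by (auto simp: pP P_def pderiv_add pderiv_monom poly_monom)
    have "a \<noteq> 0" using a1 n by (metis power_0_left zero_neq_one not_gr0)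
    thus False using a2 n by simp
  qed
  from complex_poly_decompose_rsquarefree[OF this]
  have eq: "P = (\<Prod>z | poly P z = 0. [:- z, 1:])" unfolding lP by simp
  have "poly P X = poly (\<Prod>z | poly P z = 0. [:- z, 1:]) X"
    using eq by (rule arg_cong[where f = "\<lambda>p. poly p X"])
  also have "\<dots> = (\<Prod>z | poly P z = 0. X - z)" by (simp add: poly_prod)
  finally have "poly P X = (\<Prod>z | poly P z = 0. X - z)" .
  thus ?thesis by (simp add: pP)
qed

lemma omega_image:
  assumes p: "prime p" and e: "\<not> p dvd e"
  shows "(\<lambda>k. omega p ^ (e * k)) ` {..<p} = {z. z ^ p = 1}"
    and "inj_on (\<lambda>k. omega p ^ (e * k)) {..<p}"
proof -
  have p0: "p > 0" using p by (simp add: prime_gt_0_nat)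
  show inj: "inj_on (\<lambda>k. omega p ^ (e * k)) {..<p}"
  proof (rule inj_onI)
    have main: "k = k'" if "k \<le> k'" "k' < p" "omega p ^ (e * k) = omega p ^ (e * k')" for k k'
    proof -
      have "omega p ^ (e * k') = omega p ^ (e * k) * omega p ^ (e * (k' - k))"
        using that(1) by (simp add: power_add[symmetric] algebra_simps)
      moreover have nz: "omega p ^ (e * k) \<noteq> 0" by (simp add: omega_def)
      ultimately have "omega p ^ (e * (k' - k)) = 1"
        using that(3) by (metis mult_cancel_left1)
      hence "p dvd e * (k' - k)" using omega_pow_eq_1[OF p0] by simp
      hence "p dvd (k' - k)" using e p by (simp add: prime_dvd_mult_iff)
      moreover have "k' - k < p" using that by simp
      ultimately have "k' - k = 0" using dvd_imp_le[of p "k' - k"] by (cases "k' - k = 0") auto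
      thus ?thesis using that(1) by simp
    qed
    fix k k' assume "k \<in> {..<p}" "k' \<in> {..<p}" "omega p ^ (e * k) = omega p ^ (e * k')"
    thus "k = k'" using main[of k k'] main[of k' k] by (cases "k \<le> k'") auto
  qed
  have sub: "(\<lambda>k. omega p ^ (e * k)) ` {..<p} \<subseteq> {z. z ^ p = 1}"
  proof -
    have "(omega p ^ (e * k)) ^ p = (omega p ^ p) ^ (e * k)" for k
      by (simp add: power_mult[symmetric] mult.commute)
    thus ?thesis using omega_p[OF p0] by auto
  qed
  have "card ((\<lambda>k. omega p ^ (e * k)) ` {..<p}) = card {z::complex. z ^ p = 1}"
    using card_image[OF inj] card_roots_unity_eq[OF p0] by simp
  thus "(\<lambda>k. omega p ^ (e * k)) ` {..<p} = {z. z ^ p = 1}"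
    using sub by (intro card_subset_eq finite_roots_unity) (use p0 in auto)
qed

lemma root_prod:
  assumes p: "prime p" "odd p" and e: "\<not> p dvd e"
  shows "(\<Prod>k<p. 1 + u * omega p ^ (e * k)) = 1 + u ^ p"
proof (cases "u = 0")
  case True thus ?thesis using p by (simp add: prime_gt_0_nat zero_power)
next
  case False
  have p0: "p > 0" using p by (simp add: prime_gt_0_nat)
  have "(\<Prod>k<p. 1 + u * omega p ^ (e * k)) = (\<Prod>z\<in>{z. z ^ p = 1}. 1 + u * z)"
    using prod.reindex[OF omega_image(2)[OF p(1) e], of "\<lambda>z. 1 + u * z"] omega_image(1)[OF p(1) e]
    by simp
  also have "\<dots> = (\<Prod>z\<in>{z. z ^ p = 1}. (- u) * ((- 1 / u) - z))"
    by (rule prod.cong) (use False in \<open>auto simp: field_simps\<close>)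
  also have "\<dots> = (- u) ^ card {z::complex. z ^ p = 1} * (\<Prod>z\<in>{z. z ^ p = 1}. ((- 1 / u) - z))"
    by (simp only: prod.distrib prod_constant)
  also have "\<dots> = (- u) ^ p * ((- 1 / u) ^ p - 1)"
    by (simp add: roots_prod_poly[OF p0] card_roots_unity_eq[OF p0])
  also have "\<dots> = ((- u) * (- 1 / u)) ^ p - (- u) ^ p"
    by (simp only: power_mult_distrib right_diff_distrib mult_1_right)
  also have "(- u) * (- 1 / u) = 1" using False by simp
  also have "(- u) ^ p = - (u ^ p)" using p(2) by (simp add: power_minus_odd)
  also have "(1::complex) ^ p - - (u ^ p) = 1 + u ^ p" by simp
  finally show ?thesis .
qed

lemma root_prod_dvd:
  assumes "p > 0" "p dvd e"
  shows "(\<Prod>k<p. 1 + u * omega p ^ (e * k)) = (1 + u) ^ p"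
proof -
  have "omega p ^ (e * k) = 1" for k using assms omega_pow_eq_1[of p "e*k"] by simp
  thus ?thesis by simp
qed

lemma root_prod_q:
  assumes p: "prime p" "odd p"
  shows "(\<Prod>k<p. 1 + s * (q * omega p ^ k) ^ e) =
         (if p dvd e then (1 + s * q ^ e) ^ p else 1 + s ^ p * (q ^ p) ^ e)"
proof -
  have p0: "p > 0" using p by (simp add: prime_gt_0_nat)
  have eq: "1 + s * (q * omega p ^ k) ^ e = 1 + (s * q ^ e) * omega p ^ (e * k)" for k
    by (simp add: power_mult_distrib power_mult[symmetric] mult.commute mult.left_commute)
  show ?thesis
  proof (cases "p dvd e")
    case True thus ?thesis unfolding eq using root_prod_dvd[OF p0 True] by simp
  next
    case False
    have "(s * q ^ e) ^ p = s ^ p * (q ^ p) ^ e"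
      by (simp add: power_mult_distrib power_mult[symmetric] mult.commute)
    thus ?thesis unfolding eq using root_prod[OF p False] False by simp
  qed
qed

lemma block_prod:
  fixes g h :: "nat \<Rightarrow> 'a::comm_monoid_mult"
  assumes c: "c < p"
    and gh: "\<And>M r. r < p \<Longrightarrow> r \<noteq> c \<Longrightarrow> g (p*M+r) = h (p*M+r)"
    and ab: "\<And>M. g (p*M+c) * a M = h (p*M+c) * b M"
  shows "(\<Prod>i<p*M. g i) * (\<Prod>m<M. a m) = (\<Prod>i<p*M. h i) * (\<Prod>m<M. b m)"
proof (induction M)
  case 0 thus ?case by simp
next
  case (Suc M)
  have split: "(\<Prod>i<p * Suc M. f i) = (\<Prod>i<p*M. f i) * (f (p*M+c) * (\<Prod>r\<in>{..<p}-{c}. f (p*M+r)))"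
    for f :: "nat \<Rightarrow> 'a"
  proof -
    have "(\<Prod>i<p * Suc M. f i) = (\<Prod>i<p*M. f i) * (\<Prod>r<p. f (p*M+r))"
      using prod_split_add[of f "p*M" p] by (simp add: add.commute)
    also have "(\<Prod>r<p. f (p*M+r)) = f (p*M+c) * (\<Prod>r\<in>{..<p}-{c}. f (p*M+r))"
      using c by (subst prod.remove[of _ c]) auto
    finally show ?thesis .
  qed
  have rest: "(\<Prod>r\<in>{..<p}-{c}. g (p*M+r)) = (\<Prod>r\<in>{..<p}-{c}. h (p*M+r))"
    by (rule prod.cong) (auto intro: gh)
  have "(\<Prod>i<p * Suc M. g i) * (\<Prod>m<Suc M. a m) =
        ((\<Prod>i<p*M. g i) * (\<Prod>m<M. a m)) * (g (p*M+c) * a M) * (\<Prod>r\<in>{..<p}-{c}. g (p*M+r))"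
    unfolding split by (simp add: ac_simps)
  also have "\<dots> = ((\<Prod>i<p*M. h i) * (\<Prod>m<M. b m)) * (h (p*M+c) * b M) * (\<Prod>r\<in>{..<p}-{c}. h (p*M+r))"
    unfolding Suc.IH ab rest ..
  also have "\<dots> = (\<Prod>i<p * Suc M. h i) * (\<Prod>m<Suc M. b m)"
    unfolding split by (simp add: ac_simps)
  finally show ?case .
qed

lemma lim_sub_p: "p > 0 \<Longrightarrow> X \<longlonglongrightarrow> L \<Longrightarrow> (\<lambda>M. X (p*M)) \<longlonglongrightarrow> L"
proof -
  assume "p > 0" "X \<longlonglongrightarrow> L"
  moreover have "strict_mono (\<lambda>M::nat. p*M)" using \<open>p > 0\<close> by (auto simp: strict_mono_def)
  ultimately show ?thesis using LIMSEQ_subseq_LIMSEQ by (simp add: o_def) blast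
qed

lemma EP_part:
  assumes p: "prime p" "odd p" and q: "norm q < 1"
  shows "(\<Prod>k<p. EP (q * omega p ^ k)) * EP ((q^p)^p) = EP (q^p) ^ Suc p"
proof -
  have p0: "p > 0" using p by (simp add: prime_gt_0_nat)
  define Q where "Q = q ^ p"
  have Q: "norm Q < 1" unfolding Q_def norm_power using q p0 by (simp add: power_less_one_iff)
  have Qp: "norm (Q^p) < 1" unfolding norm_power using Q p0 by (simp add: power_less_one_iff)
  have qk: "norm (q * omega p ^ k) < 1" for k using q by (simp add: norm_mult norm_power)
  define g where "g i = (\<Prod>k<p. 1 - (q * omega p ^ k) ^ (2 * Suc i))" for i
  define h where "h i = 1 - Q ^ (2 * Suc i)" for i
  define a where "a m = 1 - (Q^p) ^ (2 * Suc m)" for m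
  define b where "b m = (1 - Q ^ (2 * Suc m)) ^ p" for m
  have g_eq: "g i = (if p dvd (2 * Suc i) then (1 - q ^ (2 * Suc i)) ^ p else 1 - Q ^ (2 * Suc i))" for i
    unfolding g_def Q_def using root_prod_q[OF p, of "-1" q "2 * Suc i"] p(2)
    by (simp add: power_minus_odd)
  have c: "p - 1 < p" using p0 by simp
  have gh: "g (p*M+r) = h (p*M+r)" if "r < p" "r \<noteq> p - 1" for M r
  proof -
    have "\<not> p dvd (2 * Suc (p*M+r))"
    proof
      assume "p dvd 2 * Suc (p*M+r)"
      moreover have "\<not> p dvd 2"
      proof
        assume "p dvd 2"
        hence "p \<le> 2" by (rule dvd_imp_le) simp
        moreover have "p > 1" using p(1) by (rule prime_gt_1_nat)
        ultimately have "p = 2" by simp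
        thus False using p(2) by simp
      qed
      ultimately have "p dvd Suc (p*M+r)" using prime_dvd_mult_iff[OF p(1)] by blast
      moreover have "Suc (p*M+r) = Suc r + p * M" by simp
      ultimately have "p dvd Suc r + p * M" by simp
      hence "p dvd Suc r" using dvd_add_left_iff[of p "p*M" "Suc r"] by simp
      moreover have "0 < Suc r" "Suc r < p" using that by auto
      ultimately show False using dvd_imp_le by fastforce
    qed
    thus ?thesis by (simp add: g_eq h_def)
  qed
  have ab: "g (p*M+(p-1)) * a M = h (p*M+(p-1)) * b M" for M
  proof -
    have s: "Suc (p*M+(p-1)) = p * Suc M" using p0 by simp
    have ex: "2 * (p * Suc M) = p * (2 * Suc M)" by simp
    have e1: "q ^ (2 * Suc (p*M+(p-1))) = Q ^ (2 * Suc M)" unfolding s Q_def ex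
      by (rule power_mult)
    have e2: "Q ^ (2 * Suc (p*M+(p-1))) = (Q^p) ^ (2 * Suc M)" unfolding s ex
      by (rule power_mult)
    have dv: "p dvd 2 * Suc (p*M+(p-1))" unfolding s by simp
    have "g (p*M+(p-1)) = b M" unfolding g_eq if_P[OF dv] b_def e1 ..
    moreover have "h (p*M+(p-1)) = a M" unfolding h_def a_def e2 ..
    ultimately show ?thesis by (simp add: mult.commute)
  qed
  have id: "(\<Prod>k<p. ep (q * omega p ^ k) (p*M)) * ep (Q^p) M = ep Q (p*M) * ep Q M ^ p" for M
  proof -
    have "(\<Prod>k<p. ep (q * omega p ^ k) (p*M)) = (\<Prod>i<p*M. g i)"
      unfolding ep_def g_def by (rule prod.swap)
    moreover have "ep (Q^p) M = (\<Prod>m<M. a m)" unfolding ep_def a_def ..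
    moreover have "ep Q (p*M) = (\<Prod>i<p*M. h i)" unfolding ep_def h_def ..
    moreover have "ep Q M ^ p = (\<Prod>m<M. b m)" unfolding ep_def b_def by (simp add: prod_power_distrib)
    ultimately show ?thesis using block_prod[of "p-1" p g h a b M, OF c gh ab] by simp
  qed
  have L1: "(\<lambda>M. (\<Prod>k<p. ep (q * omega p ^ k) (p*M)) * ep (Q^p) M) \<longlonglongrightarrow> (\<Prod>k<p. EP (q * omega p ^ k)) * EP (Q^p)"
    by (intro tendsto_intros lim_sub_p[OF p0] ep_lim(1) qk Qp)
  have L2: "(\<lambda>M. (\<Prod>k<p. ep (q * omega p ^ k) (p*M)) * ep (Q^p) M) \<longlonglongrightarrow> EP Q * EP Q ^ p"
    unfolding id by (intro tendsto_intros lim_sub_p[OF p0] ep_lim(1) Q)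
  show ?thesis using LIMSEQ_unique[OF L1 L2] unfolding Q_def by simp
qed

lemma OP_part:
  assumes p: "prime p" "odd p" and q: "norm q < 1"
  shows "(\<Prod>k<p. OP (q * omega p ^ k)) * OP ((q^p)^p) = OP (q^p) ^ Suc p"
proof -
  have p0: "p > 0" using p by (simp add: prime_gt_0_nat)
  define c where "c = (p - 1) div 2"
  have pc: "2 * c + 1 = p" using p(2) unfolding c_def by (auto elim!: oddE)
  define Q where "Q = q ^ p"
  have Q: "norm Q < 1" unfolding Q_def norm_power using q p0 by (simp add: power_less_one_iff)
  have Qp: "norm (Q^p) < 1" unfolding norm_power using Q p0 by (simp add: power_less_one_iff)
  have qk: "norm (q * omega p ^ k) < 1" for k using q by (simp add: norm_mult norm_power)
  define g where "g i = (\<Prod>k<p. 1 + (q * omega p ^ k) ^ (2 * i + 1))" for i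
  define h where "h i = 1 + Q ^ (2 * i + 1)" for i
  define a where "a m = 1 + (Q^p) ^ (2 * m + 1)" for m
  define b where "b m = (1 + Q ^ (2 * m + 1)) ^ p" for m
  have g_eq: "g i = (if p dvd (2 * i + 1) then (1 + q ^ (2 * i + 1)) ^ p else 1 + Q ^ (2 * i + 1))" for i
    unfolding g_def Q_def using root_prod_q[OF p, of 1 q "2 * i + 1"] by simp
  have c: "c < p" using pc by linarith
  have gh: "g (p*M+r) = h (p*M+r)" if "r < p" "r \<noteq> c" for M r
  proof -
    have "\<not> p dvd (2 * (p*M+r) + 1)"
    proof
      assume "p dvd (2 * (p*M+r) + 1)"
      moreover have "2 * (p*M+r) + 1 = (2*r+1) + p * (2*M)" by simp
      ultimately have "p dvd (2*r+1) + p * (2*M)" by metis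
      hence "p dvd 2*r+1" using dvd_add_left_iff[of p "p*(2*M)" "2*r+1"] by simp
      then obtain t where t: "2*r+1 = p * t" by blast
      have "t \<noteq> 0" proof assume "t = 0" thus False using t by simp qed
      moreover have "t < 2"
      proof (rule ccontr)
        assume "\<not> t < 2"
        hence "p * 2 \<le> p * t" by simp
        thus False using t that(1) by linarith
      qed
      ultimately have "t = 1" by simp
      hence "2*r+1 = 2*c+1" using t pc by simp
      thus False using that(2) by simp
    qed
    thus ?thesis by (simp add: g_eq h_def)
  qed
  have ab: "g (p*M+c) * a M = h (p*M+c) * b M" for M
  proof -
    have s: "2 * (p*M+c) + 1 = p * (2 * M + 1)" using pc by (simp add: algebra_simps)
    have e1: "q ^ (2 * (p*M+c) + 1) = Q ^ (2 * M + 1)" unfolding s Q_def by (rule power_mult)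
    have e2: "Q ^ (2 * (p*M+c) + 1) = (Q^p) ^ (2 * M + 1)" unfolding s by (rule power_mult)
    have dv: "p dvd 2 * (p*M+c) + 1" unfolding s by simp
    have "g (p*M+c) = b M" unfolding g_eq if_P[OF dv] b_def e1 ..
    moreover have "h (p*M+c) = a M" unfolding h_def a_def e2 ..
    ultimately show ?thesis by (simp add: mult.commute)
  qed
  have id: "(\<Prod>k<p. op (q * omega p ^ k) (p*M)) * op (Q^p) M = op Q (p*M) * op Q M ^ p" for M
  proof -
    have "(\<Prod>k<p. op (q * omega p ^ k) (p*M)) = (\<Prod>i<p*M. g i)"
      unfolding op_def g_def by (rule prod.swap)
    moreover have "op (Q^p) M = (\<Prod>m<M. a m)" unfolding op_def a_def ..
    moreover have "op Q (p*M) = (\<Prod>i<p*M. h i)" unfolding op_def h_def ..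
    moreover have "op Q M ^ p = (\<Prod>m<M. b m)" unfolding op_def b_def by (simp add: prod_power_distrib)
    ultimately show ?thesis using block_prod[of c p g h a b M, OF c gh ab] by simp
  qed
  have L1: "(\<lambda>M. (\<Prod>k<p. op (q * omega p ^ k) (p*M)) * op (Q^p) M) \<longlonglongrightarrow> (\<Prod>k<p. OP (q * omega p ^ k)) * OP (Q^p)"
    by (intro tendsto_intros lim_sub_p[OF p0] op_lim(1) qk Qp)
  have L2: "(\<lambda>M. (\<Prod>k<p. op (q * omega p ^ k) (p*M)) * op (Q^p) M) \<longlonglongrightarrow> OP Q * OP Q ^ p"
    unfolding id by (intro tendsto_intros lim_sub_p[OF p0] op_lim(1) Q)
  show ?thesis using LIMSEQ_unique[OF L1 L2] unfolding Q_def by simp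
qed

lemma Th_nz: "norm q < 1 \<Longrightarrow> q \<noteq> 0 \<Longrightarrow> Th q \<noteq> 0"
  using jtp[of q] ep_lim(2)[of q] op_lim(2)[of q] by simp

lemma J1q:
  assumes p: "prime p" "odd p" and q: "norm q < 1" "q \<noteq> 0"
  shows "(\<Prod>k<p. Th (q * omega p ^ k)) * Th ((q^p)^p) = Th (q^p) ^ Suc p"
proof -
  have p0: "p > 0" using p by (simp add: prime_gt_0_nat)
  have nz: "omega p \<noteq> 0" by (simp add: omega_def)
  have n1: "norm (q * omega p ^ k) < 1" "q * omega p ^ k \<noteq> 0" for k
    using q nz by (simp_all add: norm_mult norm_power)
  have Q: "norm (q^p) < 1" "q^p \<noteq> 0" unfolding norm_power using q p0 by (simp_all add: power_less_one_iff)
  have Qp: "norm ((q^p)^p) < 1" "(q^p)^p \<noteq> 0" using q p0 by (simp_all add: power_mult[symmetric] norm_power power_less_one_iff)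
  have "(\<Prod>k<p. Th (q * omega p ^ k)) = (\<Prod>k<p. EP (q * omega p ^ k)) * (\<Prod>k<p. OP (q * omega p ^ k)) ^ 2"
    using jtp[OF n1] by (simp add: prod.distrib prod_power_distrib)
  hence "(\<Prod>k<p. Th (q * omega p ^ k)) * Th ((q^p)^p) =
     ((\<Prod>k<p. EP (q * omega p ^ k)) * EP ((q^p)^p)) * ((\<Prod>k<p. OP (q * omega p ^ k)) * OP ((q^p)^p)) ^ 2"
    using jtp[OF Qp] by (simp add: power_mult_distrib)
  also have "\<dots> = EP (q^p) ^ Suc p * (OP (q^p) ^ Suc p) ^ 2"
    unfolding EP_part[OF p q(1)] OP_part[OF p q(1)] ..
  also have "\<dots> = Th (q^p) ^ Suc p"
    using jtp[OF Q] by (simp add: power_mult_distrib power_mult[symmetric] mult.commute)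
  finally show ?thesis .
qed

definition nome :: "complex \<Rightarrow> complex" where "nome \<tau> = exp (pi * \<i> * \<tau>)"

lemma theta3_Th: "theta3 \<tau> = Th (nome \<tau>)"
proof -
  have ex: "exp (pi * \<i> * of_nat m * \<tau>) = nome \<tau> ^ m" for m
    unfolding nome_def exp_of_nat_mult[symmetric] by (simp add: ac_simps)
  show ?thesis unfolding theta3_def Th_def by (simp only: ex)
qed

lemma nome_H: "\<tau> \<in> upper_half_plane \<Longrightarrow> norm (nome \<tau>) < 1 \<and> nome \<tau> \<noteq> 0"
  unfolding nome_def upper_half_plane_def by (simp add: norm_exp_eq_Re)

lemma H_mult: "\<tau> \<in> upper_half_plane \<Longrightarrow> N > 0 \<Longrightarrow> of_nat N * \<tau> \<in> upper_half_plane"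
  unfolding upper_half_plane_def by simp

lemma H_shift: "\<tau> \<in> upper_half_plane \<Longrightarrow> \<tau> + of_real x \<in> upper_half_plane"
  unfolding upper_half_plane_def by simp

lemma theta3_nz: "\<tau> \<in> upper_half_plane \<Longrightarrow> theta3 \<tau> \<noteq> 0"
  unfolding theta3_Th by (intro Th_nz) (simp_all add: nome_H)

lemma nome_mult: "nome (of_nat N * \<tau>) = nome \<tau> ^ N"
  unfolding nome_def exp_of_nat_mult[symmetric] by (simp add: ac_simps)

lemma nome_shift: "p > 0 \<Longrightarrow> nome (\<tau> + 2 * of_nat k / of_nat p) = nome \<tau> * omega p ^ k"
  unfolding nome_def omega_pow exp_add[symmetric] by (simp add: algebra_simps)

lemma theta3_period: "theta3 (\<tau> + 2 * of_nat s) = theta3 \<tau>"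
proof -
  have "nome (\<tau> + 2 * of_nat s) = nome \<tau> * exp (2 * of_real pi * \<i>) ^ s"
    unfolding nome_def exp_of_nat_mult[symmetric] exp_add[symmetric] by (simp add: algebra_simps)
  thus ?thesis unfolding theta3_Th by simp
qed

lemma J1:
  assumes p: "prime p" "odd p" and t: "\<tau> \<in> upper_half_plane"
  shows "(\<Prod>k<p. theta3 (\<tau> + 2 * of_nat k / of_nat p)) =
         theta3 (of_nat p * \<tau>) ^ Suc p / theta3 (of_nat (p^2) * \<tau>)"
proof -
  have p0: "p > 0" using p by (simp add: prime_gt_0_nat)
  have "of_nat (p^2) * \<tau> \<in> upper_half_plane" using t p0 by (intro H_mult) auto
  hence nz: "theta3 (of_nat (p^2) * \<tau>) \<noteq> 0" by (rule theta3_nz)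
  have e: "(nome \<tau> ^ p) ^ p = nome \<tau> ^ (p^2)"
    by (simp add: power_mult[symmetric] power2_eq_square)
  have "(\<Prod>k<p. Th (nome \<tau> * omega p ^ k)) * Th ((nome \<tau> ^ p) ^ p) = Th (nome \<tau> ^ p) ^ Suc p"
    using J1q[OF p] nome_H[OF t] by blast
  hence j: "(\<Prod>k<p. Th (nome \<tau> * omega p ^ k)) * Th (nome \<tau> ^ (p^2)) = Th (nome \<tau> ^ p) ^ Suc p"
    by (simp only: e)
  have "(\<Prod>k<p. theta3 (\<tau> + 2 * of_nat k / of_nat p)) * theta3 (of_nat (p^2) * \<tau>) =
        theta3 (of_nat p * \<tau>) ^ Suc p"
    unfolding theta3_Th nome_shift[OF p0] nome_mult by (rule j)
  thus ?thesis using nz by (simp add: field_simps)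
qed

lemma geom_nat: "(p - 1) * (\<Sum>i<n. p ^ i) = p ^ n - (1::nat)" if "p \<ge> 1"
proof (induction n)
  case 0 thus ?case by simp
next
  case (Suc n)
  have pn: "p ^ n \<ge> 1" using that by simp
  have "(p - 1) * (\<Sum>i<Suc n. p ^ i) = (p ^ n - 1) + (p - 1) * p ^ n"
    using Suc by (simp add: algebra_simps)
  also have "(p - 1) * p ^ n = p ^ Suc n - p ^ n" by (simp add: diff_mult_distrib)
  also have "(p ^ n - 1) + (p ^ Suc n - p ^ n) = p ^ Suc n - 1"
    using pn that by (simp add: le_diff_conv)
  finally show ?case .
qed

lemma b_sum: "p \<ge> 2 \<Longrightarrow> (p ^ n - 1) div (p - 1) = (\<Sum>i<n. p ^ i::nat)"
proof -
  assume p: "p \<ge> 2"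
  hence "p - 1 > 0" by simp
  thus ?thesis using geom_nat[of p n] p by (metis nonzero_mult_div_cancel_left less_not_refl2 le_trans one_le_numeral)
qed

lemma b_rec: "p \<ge> 2 \<Longrightarrow> (\<Sum>i<Suc n. p ^ i::nat) = p * (\<Sum>i<n. p ^ i) + 1"
  by (simp only: sum.lessThan_Suc_shift) (simp add: sum_distrib_left)

lemma b_seq_rec: "p \<ge> 2 \<Longrightarrow> b_seq p (Suc n) = p * b_seq p n + 1"
  unfolding b_seq_def b_sum by (rule b_rec)

lemma b_seq_0: "b_seq p 0 = 0" by (simp add: b_seq_def)

lemma b_seq_1: "p \<ge> 2 \<Longrightarrow> b_seq p (Suc 0) = 1" by (simp add: b_seq_def)

lemma inner_shift: "(\<Prod>i\<in>{m*p..<m*p+p}. f i) = (\<Prod>s<p. f (m*p+s))"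
  for f :: "nat \<Rightarrow> complex"
proof -
  have e: "{m*p..<m*p+p} = {0+m*p..<p+m*p}" by (simp add: add.commute)
  show ?thesis unfolding e prod.atLeastLessThan_shift_bounds by (simp add: atLeast0LessThan o_def)
qed

lemma main:
  assumes p: "prime p" "odd p"
  shows "\<forall>\<tau>\<in>upper_half_plane. (\<Prod>k<p^j. theta3 (\<tau> + 2 * of_nat k / of_nat (p^j)))
         = theta3 (of_nat (p^j) * \<tau>) ^ b_seq p (j+1) / theta3 (of_nat (p^(j+1)) * \<tau>) ^ b_seq p j"
proof (induction j)
  have p2: "p \<ge> 2" using p(1) by (simp add: prime_ge_2_nat)
  case 0 show ?case using p2 by (simp add: b_seq_0 b_seq_1)
next
  case (Suc j)
  have p2: "p \<ge> 2" using p(1) by (simp add: prime_ge_2_nat)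
  have p0: "p > 0" using p2 by simp
  have pc: "(of_nat p :: complex) \<noteq> 0" using p0 by simp
  show ?case
  proof
    fix \<tau> :: complex assume t: "\<tau> \<in> upper_half_plane"
    define f where "f k = theta3 (\<tau> + 2 * of_nat k / of_nat (p ^ Suc j))" for k
    define ts where "ts s = \<tau> + 2 * of_nat s / of_nat (p ^ Suc j)" for s
    have ts_H: "ts s \<in> upper_half_plane" for s
    proof -
      have "ts s = \<tau> + of_real (2 * real s / real (p ^ Suc j))" unfolding ts_def by simp
      thus ?thesis using H_shift[OF t, of "2 * real s / real (p ^ Suc j)"] by metis
    qed
    have "(\<Prod>k<p^Suc j. f k) = (\<Prod>m<p^j. \<Prod>s<p. f (m*p+s))"
      using prod.nat_group[of f p "p^j"] by (simp add: inner_shift mult.commute)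
    also have "\<dots> = (\<Prod>s<p. \<Prod>m<p^j. f (m*p+s))" by (rule prod.swap)
    also have "\<dots> = (\<Prod>s<p. \<Prod>m<p^j. theta3 (ts s + 2 * of_nat m / of_nat (p^j)))"
    proof (intro prod.cong refl)
      fix s m
      have "\<tau> + 2 * of_nat (m*p+s) / of_nat (p ^ Suc j) = ts s + 2 * of_nat m / of_nat (p^j)"
        unfolding ts_def using pc by (simp add: field_simps)
      thus "f (m*p+s) = theta3 (ts s + 2 * of_nat m / of_nat (p^j))" unfolding f_def by simp
    qed
    also have "\<dots> = (\<Prod>s<p. theta3 (of_nat (p^j) * ts s) ^ b_seq p (j+1) / theta3 (of_nat (p^(j+1)) * ts s) ^ b_seq p j)"
      using Suc.IH ts_H by simp
    also have "\<dots> = (\<Prod>s<p. theta3 (of_nat (p^j) * \<tau> + 2 * of_nat s / of_nat p) ^ b_seq p (j+1) / theta3 (of_nat (p^(j+1)) * \<tau>) ^ b_seq p j)"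
    proof (intro prod.cong refl)
      fix s
      have e1: "of_nat (p^j) * ts s = of_nat (p^j) * \<tau> + 2 * of_nat s / of_nat p"
        unfolding ts_def using pc by (simp add: field_simps)
      have e2: "of_nat (p^(j+1)) * ts s = of_nat (p^(j+1)) * \<tau> + 2 * of_nat s"
        unfolding ts_def using pc by (simp add: field_simps)
      show "theta3 (of_nat (p^j) * ts s) ^ b_seq p (j+1) / theta3 (of_nat (p^(j+1)) * ts s) ^ b_seq p j =
            theta3 (of_nat (p^j) * \<tau> + 2 * of_nat s / of_nat p) ^ b_seq p (j+1) / theta3 (of_nat (p^(j+1)) * \<tau>) ^ b_seq p j"
        unfolding e1 e2 theta3_period ..
    qed
    also have "\<dots> = (\<Prod>s<p. theta3 (of_nat (p^j) * \<tau> + 2 * of_nat s / of_nat p)) ^ b_seq p (j+1)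
                    / theta3 (of_nat (p^(j+1)) * \<tau>) ^ (p * b_seq p j)"
      by (simp add: prod_dividef prod_power_distrib power_mult[symmetric] mult.commute)
    also have "(\<Prod>s<p. theta3 (of_nat (p^j) * \<tau> + 2 * of_nat s / of_nat p)) =
               theta3 (of_nat (p^(j+1)) * \<tau>) ^ Suc p / theta3 (of_nat (p^(j+2)) * \<tau>)"
    proof -
      have tj: "of_nat (p^j) * \<tau> \<in> upper_half_plane" using t p0 by (intro H_mult) auto
      have a: "of_nat p * (of_nat (p^j) * \<tau>) = of_nat (p^(j+1)) * \<tau>" by simp
      have b: "of_nat (p^2) * (of_nat (p^j) * \<tau>) = of_nat (p^(j+2)) * \<tau>"
        by (simp add: power_add power2_eq_square)
      show ?thesis using J1[OF p tj] unfolding a b .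
    qed
    finally have L: "(\<Prod>k<p^Suc j. f k) =
      (theta3 (of_nat (p^(j+1)) * \<tau>) ^ Suc p / theta3 (of_nat (p^(j+2)) * \<tau>)) ^ b_seq p (j+1)
                    / theta3 (of_nat (p^(j+1)) * \<tau>) ^ (p * b_seq p j)" .
    define X where "X = theta3 (of_nat (p^(j+1)) * \<tau>)"
    define Y where "Y = theta3 (of_nat (p^(j+2)) * \<tau>)"
    have X0: "X \<noteq> 0" unfolding X_def using t p0 by (intro theta3_nz H_mult) auto
    have Y0: "Y \<noteq> 0" unfolding Y_def using t p0 by (intro theta3_nz H_mult) auto
    have bb: "Suc p * b_seq p (j+1) = b_seq p (j+2) + p * b_seq p j"
      using b_seq_rec[OF p2, of j] b_seq_rec[OF p2, of "Suc j"] by (simp add: algebra_simps)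
    have "(X ^ Suc p / Y) ^ b_seq p (j+1) / X ^ (p * b_seq p j) = X ^ b_seq p (j+2) / Y ^ b_seq p (j+1)"
    proof -
      have "(X ^ Suc p / Y) ^ b_seq p (j+1) = X ^ (b_seq p (j+2) + p * b_seq p j) / Y ^ b_seq p (j+1)"
      proof -
        have "(X ^ Suc p) ^ b_seq p (j+1) = X ^ (b_seq p (j+2) + p * b_seq p j)"
          by (simp only: power_mult[symmetric] bb)
        thus ?thesis by (simp only: power_divide)
      qed
      thus ?thesis using X0 Y0 by (simp add: power_add)
    qed
    thus "(\<Prod>k<p^Suc j. theta3 (\<tau> + 2 * of_nat k / of_nat (p^Suc j))) =
       theta3 (of_nat (p^Suc j) * \<tau>) ^ b_seq p (Suc j+1) / theta3 (of_nat (p^(Suc j+1)) * \<tau>) ^ b_seq p (Suc j)"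
      using L unfolding f_def X_def Y_def by simp
  qed
qed

theorem lemma2p2:
  fixes p j :: nat and \<tau> :: complex
  assumes "prime p" and "odd p" and "\<tau> \<in> upper_half_plane"
  shows "(\<Prod>k=0..<p^j. theta3 (\<tau> + 2 * of_nat k / of_nat (p^j)))
         = theta3 (of_nat (p^j) * \<tau>) ^ b_seq p (j+1) / theta3 (of_nat (p^(j+1)) * \<tau>) ^ b_seq p j"
  using main[OF assms(1,2), of j] assms(3) by (simp add: atLeast0LessThan)

end
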